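(* Let $\mathcal{G}$ be a network with non-monitor set $N$ and set of measurement paths $P$. For every integer $k\ge1$, there is a unique maximum-cardinality $k$-identifiable subset $S^*(k)$ of $N$, and $S^*(k+1)\subseteq S^*(k)$.
   Context: $\mathcal{G}$ is a finite connected undirected graph whose node set is partitioned into monitors $M$ and non-monitors $N$; $P$ is an arbitrary set of measurement paths. A failure set is any $F\subseteq N$; a path fails iff it traverses a node of $F$. $P_F$ is the set of paths in $P$ traversing at least one node of $F$; $F_1,F_2$ are distinguishable iff $P_{F_1}\ne P_{F_2}$. $S\subseteq N$ is $k$-identifiable if any two failure sets $F_1,F_2$ with $|F_1|,|F_2|\le k$ and $F_1\cap S\ne F_2\cap S$ are distinguishable. *)

theory Defs
  imports Main
begin

definition connected_graph :: "'v set \<Rightarrow> ('v \<Rightarrow> 'v \<Rightarrow> bool) \<Rightarrow> bool" where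
  "connected_graph V E \<longleftrightarrow>
     (\<forall>u v. E u v \<longrightarrow> u \<in> V \<and> v \<in> V) \<and>
     (\<forall>u v. E u v \<longrightarrow> E v u) \<and> (\<forall>v. \<not> E v v) \<and>
     (\<forall>u\<in>V. \<forall>v\<in>V. E\<^sup>*\<^sup>* u v)"

definition is_graph_path :: "'v set \<Rightarrow> ('v \<Rightarrow> 'v \<Rightarrow> bool) \<Rightarrow> 'v list \<Rightarrow> bool" where
  "is_graph_path V E p \<longleftrightarrow> p \<noteq> [] \<and> set p \<subseteq> V \<and> distinct p \<and>
     (\<forall>i. Suc i < length p \<longrightarrow> E (p ! i) (p ! Suc i))"

definition network :: "'v set \<Rightarrow> ('v \<Rightarrow> 'v \<Rightarrow> bool) \<Rightarrow> 'v set \<Rightarrow> 'v set \<Rightarrow> 'v list set \<Rightarrow> bool" where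
  "network V E M N P \<longleftrightarrow> finite V \<and> connected_graph V E \<and>
     M \<union> N = V \<and> M \<inter> N = {} \<and> (\<forall>p\<in>P. is_graph_path V E p)"

definition failed_paths :: "'v list set \<Rightarrow> 'v set \<Rightarrow> 'v list set" where
  "failed_paths P F = {p \<in> P. set p \<inter> F \<noteq> {}}"

definition distinguishable :: "'v list set \<Rightarrow> 'v set \<Rightarrow> 'v set \<Rightarrow> bool" where
  "distinguishable P F1 F2 \<longleftrightarrow> failed_paths P F1 \<noteq> failed_paths P F2"

definition k_identifiable :: "'v set \<Rightarrow> 'v list set \<Rightarrow> nat \<Rightarrow> 'v set \<Rightarrow> bool" where
  "k_identifiable N P k S \<longleftrightarrow> S \<subseteq> N \<and>
     (\<forall>F1 F2. F1 \<subseteq> N \<and> F2 \<subseteq> N \<and> card F1 \<le> k \<and> card F2 \<le> k \<and>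
        F1 \<inter> S \<noteq> F2 \<inter> S \<longrightarrow> distinguishable P F1 F2)"

definition max_k_identifiable :: "'v set \<Rightarrow> 'v list set \<Rightarrow> nat \<Rightarrow> 'v set \<Rightarrow> bool" where
  "max_k_identifiable N P k S \<longleftrightarrow> k_identifiable N P k S \<and>
     (\<forall>S'. k_identifiable N P k S' \<longrightarrow> card S' \<le> card S)"

end

theory Submission
  imports Defs
begin

definition UU :: "'v set \<Rightarrow> 'v list set \<Rightarrow> nat \<Rightarrow> 'v set" where
  "UU N P k = \<Union>{S. k_identifiable N P k S}"

lemma UU_sub: "k_identifiable N P k S \<Longrightarrow> S \<subseteq> UU N P k"
  unfolding UU_def by blast

lemma UU_ident: "k_identifiable N P k (UU N P k)"
proof -
  have "UU N P k \<subseteq> N" unfolding UU_def k_identifiable_def by blast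
  moreover have "distinguishable P F1 F2"
    if H: "F1 \<subseteq> N" "F2 \<subseteq> N" "card F1 \<le> k" "card F2 \<le> k" "F1 \<inter> UU N P k \<noteq> F2 \<inter> UU N P k" for F1 F2
  proof -
    obtain x where x: "x \<in> UU N P k" "(x \<in> F1) \<noteq> (x \<in> F2)" using H(5) by blast
    then obtain S where S: "k_identifiable N P k S" "x \<in> S" unfolding UU_def by blast
    have "F1 \<inter> S \<noteq> F2 \<inter> S" using x S by blast
    have "\<forall>F1 F2. F1 \<subseteq> N \<and> F2 \<subseteq> N \<and> card F1 \<le> k \<and> card F2 \<le> k \<and>
        F1 \<inter> S \<noteq> F2 \<inter> S \<longrightarrow> distinguishable P F1 F2"
      using S(1) unfolding k_identifiable_def by (rule conjunct2)
    thus ?thesis using H(1-4) \<open>F1 \<inter> S \<noteq> F2 \<inter> S\<close> by blast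
  qed
  ultimately show ?thesis unfolding k_identifiable_def by blast
qed

lemma mono_k: "k_identifiable N P (Suc k) S \<Longrightarrow> k_identifiable N P k S"
  unfolding k_identifiable_def by (meson le_Suc_eq)

lemma max_eq:
  assumes "finite N" "max_k_identifiable N P k S"
  shows "S = UU N P k"
proof -
  have fU: "finite (UU N P k)" using UU_ident[of N P k] assms(1)
    unfolding k_identifiable_def using finite_subset by blast
  have "S \<subseteq> UU N P k" using assms(2) UU_sub unfolding max_k_identifiable_def by blast
  moreover have "card (UU N P k) \<le> card S" using assms(2) UU_ident unfolding max_k_identifiable_def by blast
  ultimately show ?thesis using fU card_subset_eq[OF fU] card_mono[OF fU] by (meson le_antisym)
qed

theorem corollary2:
  fixes V :: "'v set" and E :: "'v \<Rightarrow> 'v \<Rightarrow> bool" and M N :: "'v set"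
    and P :: "'v list set" and k :: nat
  assumes "network V E M N P" and "k \<ge> 1"
  shows "(\<exists>!S. max_k_identifiable N P k S) \<and>
         (\<forall>S T. max_k_identifiable N P k S \<and> max_k_identifiable N P (k + 1) T \<longrightarrow> T \<subseteq> S)"
proof -
  have fN: "finite N" using assms(1) unfolding network_def by (metis finite_Un)
  have fU: "finite (UU N P k)" using UU_ident[of N P k] fN
    unfolding k_identifiable_def using finite_subset by blast
  have ex: "max_k_identifiable N P k (UU N P k)"
  proof -
    have "card S' \<le> card (UU N P k)" if "k_identifiable N P k S'" for S'
      using card_mono[OF fU UU_sub[OF that]] .
    thus ?thesis unfolding max_k_identifiable_def using UU_ident by blast
  qed
  have 1: "\<exists>!S. max_k_identifiable N P k S"
  proof (rule ex1I[of _ "UU N P k"])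
    show "max_k_identifiable N P k (UU N P k)" by (rule ex)
  next
    fix S assume "max_k_identifiable N P k S" thus "S = UU N P k" by (rule max_eq[OF fN])
  qed
  have 2: "T \<subseteq> S" if "max_k_identifiable N P k S" "max_k_identifiable N P (k + 1) T" for S T
  proof -
    have "k_identifiable N P (Suc k) T" using that(2) unfolding max_k_identifiable_def by simp
    hence "k_identifiable N P k T" by (rule mono_k)
    hence "T \<subseteq> UU N P k" by (rule UU_sub)
    thus ?thesis using max_eq[OF fN that(1)] by simp
  qed
  show ?thesis using 1 2 by auto
qed

end
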